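(* For every $n \ge 1$ and every $\omega \in S_n$, the poset $M_\omega$ is $B_2$-free if and only if $\omega$ avoids both the pattern $3412$ and the pattern $3421$.
   Context: Permutations $\omega\in S_n$ are written in one-line notation $\omega=\omega(1)\omega(2)\cdots\omega(n)$. Let ${\rm Inv}(\omega)=\{(i,j): 1\le i<j\le n,\ \omega(i)>\omega(j)\}$. For $1\le i\le n$ let $c_i(\omega)=\#\{j: i<j\le n,\ \omega(i)>\omega(j)\}$, and for $1\le i<j\le n$ let $c_{i,j}(\omega)=\#\{k: i<k<j,\ \omega(i)>\omega(k)\}$. Write $[m]=\{1,\dots,m\}$. For $i\in[n]$ with $c_i(\omega)>0$ and $x\in[c_i(\omega)]$, define $m_{i,x}(\omega)\in\mathbb{N}^n$ coordinatewise: its $j$-th coordinate is $0$ if $j<i$; $x$ if $j=i$; $0$ if $j>i$ and $(i,j)\in{\rm Inv}(\omega)$; and $\max\{0,\,x-c_{i,j}(\omega)\}$ if $j>i$ and $(i,j)\notin{\rm Inv}(\omega)$. Let $M_\omega=\{m_{i,x}(\omega): i\in[n],\ c_i(\omega)>0,\ x\in[c_i(\omega)]\}$, partially ordered by the product order on $\mathbb{N}^n$ ($u\le v$ iff $u_k\le v_k$ for all $k$). $B_2$ denotes the Boolean lattice of rank 2 (four elements: a minimum, a maximum, and two incomparable elements between them). A poset $P$ is $B_2$-free if no four distinct elements of $P$ form an induced subposet isomorphic to $B_2$. $\omega$ contains the pattern $3412$ (resp. $3421$) if there exist $i<j<k<l$ with $\omega(k)<\omega(l)<\omega(i)<\omega(j)$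 (resp. $\omega(l)<\omega(k)<\omega(i)<\omega(j)$); $\omega$ avoids the pattern otherwise. *)

theory Defs
  imports Main "HOL-Combinatorics.Permutations"
begin

text \<open>Permutations of [n] are functions nat => nat with w permutes {1..n};
 w i is the i-th entry of the one-line notation.  Vectors in N^n are
 functions nat => nat, coordinate j for j in {1..n}, and 0 elsewhere;
 the product order is then the pointwise order on functions.\<close>

definition inv_count :: "(nat \<Rightarrow> nat) \<Rightarrow> nat \<Rightarrow> nat \<Rightarrow> nat" where
  "inv_count w n i = card {j. i < j \<and> j \<le> n \<and> w i > w j}"

definition inv_count_between :: "(nat \<Rightarrow> nat) \<Rightarrow> nat \<Rightarrow> nat \<Rightarrow> nat" where
  "inv_count_between w i j = card {k. i < k \<and> k < j \<and> w i > w k}"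

definition mvec :: "(nat \<Rightarrow> nat) \<Rightarrow> nat \<Rightarrow> nat \<Rightarrow> nat \<Rightarrow> (nat \<Rightarrow> nat)" where
  "mvec w n i x = (\<lambda>j. if j < i \<or> n < j then 0
                      else if j = i then x
                      else if w i > w j then 0
                      else x - inv_count_between w i j)"

definition Mset :: "(nat \<Rightarrow> nat) \<Rightarrow> nat \<Rightarrow> (nat \<Rightarrow> nat) set" where
  "Mset w n = {mvec w n i x | i x. i \<in> {1..n} \<and> 0 < inv_count w n i \<and> x \<in> {1..inv_count w n i}}"

text \<open>No four elements of P induce a copy of the Boolean lattice B_2
 (distinctness of the four elements follows from the strict inequalities).\<close>
definition B2_free :: "'a::order set \<Rightarrow> bool" where
  "B2_free P \<longleftrightarrow> \<not> (\<exists>a\<in>P. \<exists>b\<in>P. \<exists>c\<in>P. \<exists>d\<in>P.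
      a < b \<and> a < c \<and> b < d \<and> c < d \<and> \<not> b \<le> c \<and> \<not> c \<le> b)"

definition contains_3412 :: "(nat \<Rightarrow> nat) \<Rightarrow> nat \<Rightarrow> bool" where
  "contains_3412 w n \<longleftrightarrow> (\<exists>i j k l. 1 \<le> i \<and> i < j \<and> j < k \<and> k < l \<and> l \<le> n \<and>
      w k < w l \<and> w l < w i \<and> w i < w j)"

definition contains_3421 :: "(nat \<Rightarrow> nat) \<Rightarrow> nat \<Rightarrow> bool" where
  "contains_3421 w n \<longleftrightarrow> (\<exists>i j k l. 1 \<le> i \<and> i < j \<and> j < k \<and> k < l \<and> l \<le> n \<and>
      w l < w k \<and> w k < w i \<and> w i < w j)"

end

theory Submission
  imports Defs
begin

lemma mvec_before: "j < i \<Longrightarrow> mvec w n i x j = 0"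
  by (simp add: mvec_def)

lemma mvec_at: "i \<le> n \<Longrightarrow> mvec w n i x i = x"
  by (simp add: mvec_def)

lemma L1:
  assumes "mvec w n i x \<le> mvec w n i' y" "i \<le> n" "1 \<le> x"
  shows "i' \<le> i"
proof (rule ccontr)
  assume "\<not> i' \<le> i"
  hence "i < i'" by simp
  have "mvec w n i x i \<le> mvec w n i' y i" using assms(1) by (simp add: le_fun_def)
  thus False using mvec_at[OF assms(2)] mvec_before[OF \<open>i < i'\<close>] assms(3) by simp
qed

lemma L2:
  assumes "inj w" "mvec w n i x \<le> mvec w n i' y" "i \<le> n" "1 \<le> x" "i' < i"
  shows "w i' < w i \<and> x + inv_count_between w i' i \<le> y"
proof -
  have "mvec w n i x i \<le> mvec w n i' y i" using assms(2) by (simp add: le_fun_def)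
  hence h: "x \<le> (if w i' > w i then 0 else y - inv_count_between w i' i)"
    using assms(3,5) by (simp add: mvec_def)
  have ne: "w i' \<noteq> w i" using assms(1,5) by (metis inj_eq less_irrefl)
  show ?thesis using h ne assms(4) by (auto split: if_splits)
qed

lemma L3:
  assumes "mvec w n i x \<le> mvec w n i y" "i \<le> n"
  shows "x \<le> y"
proof -
  have "mvec w n i x i \<le> mvec w n i y i" using assms(1) by (simp add: le_fun_def)
  thus ?thesis using assms(2) by (simp add: mvec_at)
qed

lemma L3': "x \<le> y \<Longrightarrow> mvec w n i x \<le> mvec w n i y"
  by (auto simp: le_fun_def mvec_def intro: diff_le_mono)

lemma cb_fin: "finite {k. (i::nat) < k \<and> k < j \<and> P k}"
  apply (rule finite_subset[of _ "{..<j}"]) by auto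

lemma cb_tri:
  assumes "i' < i" "i < j" "w i' < w i"
  shows "inv_count_between w i' j \<le> inv_count_between w i' i + inv_count_between w i j"
proof -
  have "{k. i' < k \<and> k < j \<and> w i' > w k} \<subseteq>
        {k. i' < k \<and> k < i \<and> w i' > w k} \<union> {k. i < k \<and> k < j \<and> w i > w k}"
    using assms by auto (metis less_asym linorder_neqE_nat)
  hence "card {k. i' < k \<and> k < j \<and> w i' > w k} \<le>
        card ({k. i' < k \<and> k < i \<and> w i' > w k} \<union> {k. i < k \<and> k < j \<and> w i > w k})"
    by (intro card_mono) (auto intro: cb_fin)
  also have "\<dots> \<le> card {k. i' < k \<and> k < i \<and> w i' > w k} + card {k. i < k \<and> k < j \<and> w i > w k}"
    by (rule card_Un_le)
  finally show ?thesis by (simp add: inv_count_between_def)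
qed

lemma cb_mono:
  assumes "j \<le> j'"
  shows "inv_count_between w i j \<le> inv_count_between w i j'"
  unfolding inv_count_between_def
  by (rule card_mono[OF cb_fin]) (use assms in auto)

lemma L4:
  assumes "i' < i" "w i' < w i" "x + inv_count_between w i' i \<le> y"
  shows "mvec w n i x \<le> mvec w n i' y"
proof (rule le_funI)
  fix j
  show "mvec w n i x j \<le> mvec w n i' y j"
  proof (cases "j < i \<or> n < j")
    case True thus ?thesis by (simp add: mvec_def)
  next
    case False
    show ?thesis
    proof (cases "j = i")
      case True thus ?thesis using False assms by (simp add: mvec_def)
    next
      case ne: False
      hence ij: "i < j" using False by simp
      show ?thesis
      proof (cases "w i > w j")
        case True thus ?thesis using False ne by (simp add: mvec_def)
      next
        case nt: False
        have "inv_count_between w i' j \<le> inv_count_between w i' i + inv_count_between w i j"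
          using cb_tri[OF assms(1) ij assms(2)] .
        thus ?thesis using False ne nt assms ij by (simp add: mvec_def)
      qed
    qed
  qed
qed


lemma split_cnt:
  assumes "(p::nat) < q" "q \<le> n" "\<not> w q < v"
  shows "card {k. p<k \<and> k\<le>n \<and> w k<v} = card {k. p<k \<and> k<q \<and> w k<v} + card {k. q<k \<and> k\<le>n \<and> w k<(v::nat)}"
proof -
  have e: "{k. p<k \<and> k\<le>n \<and> w k<v} = {k. p<k \<and> k<q \<and> w k<v} \<union> {k. q<k \<and> k\<le>n \<and> w k<v}"
    (is "?L = ?M \<union> ?R")
  proof
    show "?L \<subseteq> ?M \<union> ?R"
    proof
      fix k assume "k \<in> ?L"
      hence k: "p<k" "k\<le>n" "w k<v" by auto
      have "k \<noteq> q" using k(3) assms(3) by auto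
      thus "k \<in> ?M \<union> ?R" using k by auto
    qed
    show "?M \<union> ?R \<subseteq> ?L" using assms by auto
  qed
  have f2: "finite {k. q<k \<and> k\<le>n \<and> w k<v}"
    apply (rule finite_subset[of _ "{..n}"]) by auto
  show ?thesis unfolding e
    by (rule card_Un_disjoint[OF cb_fin f2]) auto
qed

lemma Mset_E:
  "v \<in> Mset w n \<Longrightarrow> \<exists>i x. v = mvec w n i x \<and> 1 \<le> i \<and> i \<le> n \<and> 1 \<le> x \<and> x \<le> inv_count w n i"
  by (auto simp: Mset_def)

lemma Mset_I:
  "1 \<le> i \<Longrightarrow> i \<le> n \<Longrightarrow> 1 \<le> x \<Longrightarrow> x \<le> inv_count w n i \<Longrightarrow> mvec w n i x \<in> Mset w n"
  unfolding Mset_def by (rule CollectI, intro exI[of _ i] exI[of _ x]) auto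

lemma core:
  assumes inj: "inj w"
  and r: "1 \<le> D" "C \<le> n" "A \<le> n" "B \<le> n"
  and x: "1 \<le> xa" "1 \<le> xb" "1 \<le> xc" "yd \<le> inv_count w n D"
  and BC: "B < C"
  and ac: "mvec w n A xa < mvec w n C xc"
  and cd: "mvec w n C xc \<le> mvec w n D yd"
  and ab: "mvec w n A xa \<le> mvec w n B xb"
  and bd: "mvec w n B xb \<le> mvec w n D yd"
  and ncb: "\<not> mvec w n C xc \<le> mvec w n B xb"
  shows "\<exists>p q. 1 \<le> p \<and> p < q \<and> q \<le> n \<and> w p < w q \<and> 2 \<le> card {k. q<k \<and> k\<le>n \<and> w k < w p}"
proof -
  have CA: "C \<le> A" using L1[OF less_imp_le[OF ac] r(3) x(1)] .
  have DB: "D \<le> B" using L1[OF bd r(4) x(2)] .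
  have DC: "D < C" using DB BC by simp
  have BA: "B < A" using BC CA by simp
  from L2[OF inj cd r(2) x(3) DC] have wDC: "w D < w C"
    and cdv: "xc + inv_count_between w D C \<le> yd" by auto
  from L2[OF inj ab r(3) x(1) BA] have wBA: "w B < w A"
    and abv: "xa + inv_count_between w B A \<le> xb" by auto
  have splitD: "inv_count w n D = inv_count_between w D C + card {k. C<k \<and> k\<le>n \<and> w k < w D}"
    using split_cnt[of D C n w "w D"] DC r(2) wDC
    unfolding inv_count_def inv_count_between_def by simp
  show ?thesis
  proof (cases "2 \<le> xc")
    case True
    then show ?thesis using splitD cdv x(4) DC r wDC
      by (intro exI[of _ D] exI[of _ C]) auto
  next
    case False
    hence xc1: "xc = 1" using x(3) by simp
    have "C \<noteq> A"
    proof
      assume "C = A"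
      hence "xa \<le> xc" using L3[of w n A xa xc] less_imp_le[OF ac] r(3) by simp
      hence "xa = xc" using xc1 x(1) by simp
      thus False using ac \<open>C = A\<close> by simp
    qed
    hence CA': "C < A" using CA by simp
    have "\<not> w B < w C"
    proof
      assume "w B < w C"
      hence "\<not> (xc + inv_count_between w B C \<le> xb)" using ncb L4[OF BC] by blast
      moreover have "inv_count_between w B C \<le> inv_count_between w B A" using cb_mono CA by blast
      ultimately show False using abv x(1) xc1 by simp
    qed
    hence wCB: "w C < w B" using inj BC by (metis inj_eq linorder_neqE_nat less_irrefl)
    have DB': "D < B" using DB wDC wCB by (metis le_neq_implies_less less_asym)
    from L2[OF inj bd r(4) x(2) DB'] have wDB: "w D < w B"
      and bdv: "xb + inv_count_between w D B \<le> yd" by auto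
    define S where "S = {k. B<k \<and> k<A \<and> w k < w D}"
    have split1: "inv_count w n D = inv_count_between w D B + card {k. B<k \<and> k\<le>n \<and> w k < w D}"
      using split_cnt[of D B n w "w D"] DB' r(4) wDB
      unfolding inv_count_def inv_count_between_def by simp
    have split2: "card {k. B<k \<and> k\<le>n \<and> w k < w D} = card S + card {k. A<k \<and> k\<le>n \<and> w k < w D}"
      using split_cnt[of B A n w "w D"] BA r(3) wDB wBA unfolding S_def by simp
    have "insert C S \<subseteq> {k. B<k \<and> k<A \<and> w k < w B}" using BC CA' wCB wDB unfolding S_def by auto
    hence "card (insert C S) \<le> inv_count_between w B A"
      unfolding inv_count_between_def by (rule card_mono[OF cb_fin])
    moreover have "C \<notin> S" using wDC unfolding S_def by auto
    moreover have "finite S" unfolding S_def by (rule cb_fin)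
    ultimately have "card S + 1 \<le> inv_count_between w B A" by simp
    then have "2 \<le> card {k. A<k \<and> k\<le>n \<and> w k < w D}" using split1 split2 abv bdv x(1,4) by linarith
    then show ?thesis using DB' BA r wDB wBA
      by (intro exI[of _ D] exI[of _ A]) auto
  qed
qed

lemma pat:
  assumes "inj w" "1 \<le> p" "p < q" "q \<le> n" "w p < w q" "2 \<le> card {k. q<k \<and> k\<le>n \<and> w k < w p}"
  shows "contains_3412 w n \<or> contains_3421 w n"
proof -
  let ?S = "{k. q<k \<and> k\<le>n \<and> w k < w p}"
  have fin: "finite ?S" apply (rule finite_subset[of _ "{..n}"]) by auto
  have "\<not> (\<forall>a\<in>?S. \<forall>b\<in>?S. a = b)"
    using assms(6) card_le_Suc0_iff_eq[OF fin] by auto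
  then obtain k0 l0 where kl0: "k0 \<in> ?S" "l0 \<in> ?S" "k0 \<noteq> l0" by blast
  obtain k l where kl: "k \<in> ?S" "l \<in> ?S" "k < l"
  proof (cases "k0 < l0")
    case True thus ?thesis using that kl0 by blast
  next
    case False hence "l0 < k0" using kl0(3) by simp
    thus ?thesis using that kl0 by blast
  qed
  have ne: "w k \<noteq> w l" using assms(1) kl(3) by (metis inj_eq less_irrefl)
  have k: "q < k" "k \<le> n" "w k < w p" using kl(1) by auto
  have l: "q < l" "l \<le> n" "w l < w p" using kl(2) by auto
  show ?thesis
  proof (cases "w k < w l")
    case True
    have "contains_3412 w n" unfolding contains_3412_def
      by (intro exI[of _ p] exI[of _ q] exI[of _ k] exI[of _ l]) (use True k l kl(3) assms(2-5) in auto)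
    thus ?thesis by simp
  next
    case False
    hence "w l < w k" using ne by simp
    have "contains_3421 w n" unfolding contains_3421_def
      by (intro exI[of _ p] exI[of _ q] exI[of _ k] exI[of _ l]) (use \<open>w l < w k\<close> k l kl(3) assms(2-5) in auto)
    thus ?thesis by simp
  qed
qed

theorem mainTheorem1:
  fixes w :: "nat \<Rightarrow> nat" and n :: nat
  assumes "1 \<le> n" and "w permutes {1..n}"
  shows "B2_free (Mset w n) \<longleftrightarrow> \<not> contains_3412 w n \<and> \<not> contains_3421 w n"
proof -
  have inj: "inj w" using permutes_inj[OF assms(2)] .
  show ?thesis
  proof
    assume free: "B2_free (Mset w n)"
    show "\<not> contains_3412 w n \<and> \<not> contains_3421 w n"
    proof (rule ccontr)
      assume "\<not> (\<not> contains_3412 w n \<and> \<not> contains_3421 w n)"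
      hence "contains_3412 w n \<or> contains_3421 w n" by simp
      then obtain p q r s where pat: "1 \<le> p" "p<q" "q<r" "r<s" "s \<le> n"
        "w r < w p" "w s < w p" "w p < w q"
      proof
        assume "contains_3412 w n"
        then obtain i j k l where h: "1 \<le> i" "i < j" "j < k" "k < l" "l \<le> n"
          "w k < w l" "w l < w i" "w i < w j" unfolding contains_3412_def by blast
        show ?thesis by (rule that[OF h(1-5)]) (use h(6-8) in auto)
      next
        assume "contains_3421 w n"
        then obtain i j k l where h: "1 \<le> i" "i < j" "j < k" "k < l" "l \<le> n"
          "w l < w k" "w k < w i" "w i < w j" unfolding contains_3421_def by blast
        show ?thesis by (rule that[OF h(1-5)]) (use h(6-8) in auto)
      qed
      define c0 where "c0 = inv_count_between w p q"
      define a where "a = mvec w n q 1"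
      define b where "b = mvec w n p (c0+1)"
      define c where "c = mvec w n q 2"
      define d where "d = mvec w n p (c0+2)"
      have rs: "{r,s} \<subseteq> {k. q<k \<and> k\<le>n \<and> w k < w p}" using pat by auto
      have crs: "card {r,s} = 2" using pat by simp
      have fin1: "finite {k. q<k \<and> k\<le>n \<and> w k < w p}"
        apply (rule finite_subset[of _ "{..n}"]) by auto
      have "2 \<le> card {k. q<k \<and> k\<le>n \<and> w k < w p}"
        using card_mono[OF fin1 rs] crs by simp
      hence icp: "c0 + 2 \<le> inv_count w n p"
        using split_cnt[of p q n w "w p"] pat unfolding inv_count_def inv_count_between_def c0_def by simp
      have rs2: "{r,s} \<subseteq> {k. q<k \<and> k\<le>n \<and> w k < w q}" using pat by auto
      have fin2: "finite {k. q<k \<and> k\<le>n \<and> w k < w q}"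
        apply (rule finite_subset[of _ "{..n}"]) by auto
      have icq: "2 \<le> inv_count w n q"
        using card_mono[OF fin2 rs2] crs unfolding inv_count_def by simp
      have pn: "p \<le> n" "q \<le> n" using pat by auto
      have mem: "a \<in> Mset w n" "b \<in> Mset w n" "c \<in> Mset w n" "d \<in> Mset w n"
        unfolding a_def b_def c_def d_def using icp icq pat pn by (auto intro!: Mset_I)
      have ab: "a < b"
      proof -
        have "a \<le> b" unfolding a_def b_def by (rule L4) (use pat c0_def in auto)
        moreover have "a p \<noteq> b p" unfolding a_def b_def
          using mvec_before[OF pat(2)] mvec_at[OF pn(1)] by simp
        ultimately show ?thesis by (metis less_le)
      qed
      have ac: "a < c"
      proof -
        have "a \<le> c" unfolding a_def c_def by (rule L3') simp
        moreover have "a q \<noteq> c q" unfolding a_def c_def using mvec_at[OF pn(2)] by simp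
        ultimately show ?thesis by (metis less_le)
      qed
      have bd: "b < d"
      proof -
        have "b \<le> d" unfolding b_def d_def by (rule L3') simp
        moreover have "b p \<noteq> d p" unfolding b_def d_def using mvec_at[OF pn(1)] by simp
        ultimately show ?thesis by (metis less_le)
      qed
      have cd: "c < d"
      proof -
        have "c \<le> d" unfolding c_def d_def by (rule L4) (use pat c0_def in auto)
        moreover have "c p \<noteq> d p" unfolding c_def d_def
          using mvec_before[OF pat(2)] mvec_at[OF pn(1)] by simp
        ultimately show ?thesis by (metis less_le)
      qed
      have nbc: "\<not> b \<le> c"
      proof
        assume "b \<le> c"
        hence "q \<le> p" unfolding b_def c_def by (rule L1) (use pn in auto)
        thus False using pat by simp
      qed
      have ncb: "\<not> c \<le> b"
      proof
        assume "c \<le> b"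
        hence "2 + inv_count_between w p q \<le> c0 + 1" unfolding b_def c_def
          using L2[OF inj _ pn(2) _ pat(2), of 2 "c0+1"] by simp
        thus False unfolding c0_def by simp
      qed
      have "\<not> B2_free (Mset w n)" unfolding B2_free_def not_not
        apply (rule bexI[OF _ mem(1)], rule bexI[OF _ mem(2)], rule bexI[OF _ mem(3)], rule bexI[OF _ mem(4)])
        using ab ac bd cd nbc ncb by simp
      thus False using free by simp
    qed
  next
    assume np: "\<not> contains_3412 w n \<and> \<not> contains_3421 w n"
    show "B2_free (Mset w n)"
      unfolding B2_free_def
    proof
      assume "\<exists>a\<in>Mset w n. \<exists>b\<in>Mset w n. \<exists>c\<in>Mset w n. \<exists>d\<in>Mset w n.
        a < b \<and> a < c \<and> b < d \<and> c < d \<and> \<not> b \<le> c \<and> \<not> c \<le> b"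
      then obtain a b c d where m: "a \<in> Mset w n" "b \<in> Mset w n" "c \<in> Mset w n" "d \<in> Mset w n"
        and rel: "a < b" "a < c" "b < d" "c < d" "\<not> b \<le> c" "\<not> c \<le> b" by blast
      obtain A xa where a: "a = mvec w n A xa" "1 \<le> A" "A \<le> n" "1 \<le> xa" "xa \<le> inv_count w n A"
        using Mset_E[OF m(1)] by blast
      obtain B xb where b: "b = mvec w n B xb" "1 \<le> B" "B \<le> n" "1 \<le> xb" "xb \<le> inv_count w n B"
        using Mset_E[OF m(2)] by blast
      obtain C xc where c: "c = mvec w n C xc" "1 \<le> C" "C \<le> n" "1 \<le> xc" "xc \<le> inv_count w n C"
        using Mset_E[OF m(3)] by blast
      obtain D yd where d: "d = mvec w n D yd" "1 \<le> D" "D \<le> n" "1 \<le> yd" "yd \<le> inv_count w n D"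
        using Mset_E[OF m(4)] by blast
      have "B \<noteq> C"
      proof
        assume "B = C"
        show False
        proof (cases "xb \<le> xc")
          case True thus False using rel(5) L3'[of xb xc w n B] b(1) c(1) \<open>B = C\<close> by simp
        next
          case False thus False using rel(6) L3'[of xc xb w n B] b(1) c(1) \<open>B = C\<close> by simp
        qed
      qed
      then have "\<exists>p q. 1 \<le> p \<and> p < q \<and> q \<le> n \<and> w p < w q \<and> 2 \<le> card {k. q<k \<and> k\<le>n \<and> w k < w p}"
      proof (cases "B < C")
        case True
        show ?thesis
          by (rule core[OF inj d(2) c(3) a(3) b(3) a(4) b(4) c(4) d(5) True])
             (use rel a b c d in \<open>auto intro: less_imp_le\<close>)
      next
        case False
        hence CB: "C < B" using \<open>B \<noteq> C\<close> by simp
        show ?thesis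
          by (rule core[OF inj d(2) b(3) a(3) c(3) a(4) c(4) b(4) d(5) CB])
             (use rel a b c d in \<open>auto intro: less_imp_le\<close>)
      qed
      then obtain p q where "1 \<le> p" "p < q" "q \<le> n" "w p < w q" "2 \<le> card {k. q<k \<and> k\<le>n \<and> w k < w p}"
        by blast
      from pat[OF inj this] np show False by blast
    qed
  qed
qed

end
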